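(* For every $t_1,\dots,t_k\in S$ and $a_i\in\Gamma(t_i)$: (a) $p^{t_1,\dots,t_k}_{a_1,\dots,a_k}\mathcal H_\pi\subset\mathcal H_\pi$ and $p^{t_1,\dots,t_k}_{a_1,\dots,a_k}\mathcal H_\pi^\perp\subset\mathcal H_\pi^\perp$; (b) $p^{t_1,\dots,t_k}_{a_1,\dots,a_k}$ commutes with $p_\pi$; (c) the restriction of $p^{t_1,\dots,t_k}_{a_1,\dots,a_k}$ to $\mathcal H_\pi$ is the projection in $\mathcal H_\pi$ onto the subspace $\mathcal H^{t_1,\dots,t_k}_{a_1,\dots,a_k}\cap\mathcal H_\pi$; (d) for every $\phi\in\mathcal H_\pi$, $p^{t_1,\dots,t_k}_{a_1,\dots,a_k}\phi=p^{t_1}_{a_1}\cdots p^{t_k}_{a_k}\phi$; (e) for every $\phi\in\mathcal H_\pi$ and every $i\in\{1,\dots,k\}$, $$\sum_{a_i\in\Gamma(t_i)}p^{t_1,\dots,t_{i-1},t_i,t_{i+1},\dots,t_k}_{a_1,\dots,a_{i-1},a_i,a_{i+1},\dots,a_k}\phi=p^{t_1,\dots,t_{i-1},t_{i+1},\dots,t_k}_{a_1,\dots,a_{i-1},a_{i+1},\dots,a_k}\phi .$$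
   Context: Let $\mathcal H$ be a complex Hilbert space. A projection is a bounded self-adjoint idempotent operator; $\wedge_\alpha p_\alpha$ is the projection onto the intersection of ranges of the $p_\alpha$. Sums of countably many operators are understood strongly. Let $S$ be a set; for each $t\in S$ let $\Gamma(t)$ be a countable set and for $a\in\Gamma(t)$ let $p^t_a$ be a projection on $\mathcal H$ with range $\mathcal H^t_a$ and $\sum_{a\in\Gamma(t)}p^t_a=I$. Let $\pi=\{p^t_a\}$, $\mathcal H^{t_1,\dots,t_k}_{a_1,\dots,a_k}=\bigcap_i\mathcal H^{t_i}_{a_i}$ and $p^{t_1,\dots,t_k}_{a_1,\dots,a_k}=\wedge_{i=1}^kp^{t_i}_{a_i}$ its projection. $\pi$ commutes on $\phi$ if $W\phi=V\phi$ whenever $W,V$ are finite products of elements of $\pi$ with the same factors (with multiplicity) in possibly different orders; $\mathcal H_\pi$ is the closed subspace of such $\phi$ and $p_\pi$ the projection onto it. *)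

theory Defs
  imports "HOL-Analysis.Analysis"
begin

text \<open>A complex inner product space, encoded as a real inner product space
(whose real inner product is the real part of the complex one) together with a
complex scalar multiplication compatible with the real one and with the norm.
A complex Hilbert space is an instance of this class that is also complete.\<close>

class complex_inner = real_inner +
  fixes scaleC :: "complex \<Rightarrow> 'a \<Rightarrow> 'a"
  assumes scaleC_add_right: "scaleC c (x + y) = scaleC c x + scaleC c y"
    and scaleC_add_left: "scaleC (c + d) x = scaleC c x + scaleC d x"
    and scaleC_scaleC: "scaleC c (scaleC d x) = scaleC (c * d) x"
    and scaleC_of_real: "scaleC (of_real r) x = scaleR r x"
    and norm_scaleC: "norm (scaleC c x) = cmod c * norm x"

instantiation complex :: complex_inner
begin
definition scaleC_complex :: "complex \<Rightarrow> complex \<Rightarrow> complex" where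
  "scaleC_complex c x = c * x"
instance
  by standard (auto simp: scaleC_complex_def algebra_simps norm_mult scaleR_conv_of_real)
end

text \<open>The complex inner product (conjugate-linear in the first argument);
its real part is the real inner product.\<close>
definition cinner :: "'a::complex_inner \<Rightarrow> 'a \<Rightarrow> complex" where
  "cinner x y = Complex (inner x y) (inner (scaleC \<i> x) y)"

definition is_projection :: "('a::complex_inner \<Rightarrow> 'a) \<Rightarrow> bool" where
  "is_projection P \<longleftrightarrow> bounded_linear P \<and> (\<forall>c x. P (scaleC c x) = scaleC c (P x))
     \<and> (\<forall>x y. cinner (P x) y = cinner x (P y)) \<and> P \<circ> P = P"

definition orthoproj :: "'a::complex_inner set \<Rightarrow> 'a \<Rightarrow> 'a" where
  "orthoproj M x = (THE y. y \<in> M \<and> (\<forall>z\<in>M. cinner z (x - y) = 0))"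

definition orth_compl :: "'a::complex_inner set \<Rightarrow> 'a set" where
  "orth_compl M = {x. \<forall>y\<in>M. cinner y x = 0}"

definition pi_family :: "'t set \<Rightarrow> ('t \<Rightarrow> 'b set) \<Rightarrow> ('t \<Rightarrow> 'b \<Rightarrow> 'h \<Rightarrow> 'h) \<Rightarrow> ('h \<Rightarrow> 'h) set" where
  "pi_family S \<Gamma> p = {p t a | t a. t \<in> S \<and> a \<in> \<Gamma> t}"

definition op_prod :: "('h \<Rightarrow> 'h) list \<Rightarrow> 'h \<Rightarrow> 'h" where
  "op_prod Ws = foldr (\<circ>) Ws id"

definition commutes_on :: "('h \<Rightarrow> 'h) set \<Rightarrow> 'h \<Rightarrow> bool" where
  "commutes_on PI \<phi> \<longleftrightarrow> (\<forall>Ws Vs. set Ws \<subseteq> PI \<and> set Vs \<subseteq> PI \<and> mset Ws = mset Vs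
       \<longrightarrow> op_prod Ws \<phi> = op_prod Vs \<phi>)"

definition H_pi :: "('h \<Rightarrow> 'h) set \<Rightarrow> 'h set" where
  "H_pi PI = {\<phi>. commutes_on PI \<phi>}"

text \<open>p^{t_1..t_k}_{a_1..a_k} for indices in a set I of positions:
projection onto the intersection of the ranges (identity if I is empty).\<close>
definition meet_proj :: "('t \<Rightarrow> 'b \<Rightarrow> 'h::complex_inner \<Rightarrow> 'h) \<Rightarrow> (nat \<Rightarrow> 't) \<Rightarrow> (nat \<Rightarrow> 'b) \<Rightarrow> nat set \<Rightarrow> 'h \<Rightarrow> 'h" where
  "meet_proj p t a I = orthoproj (\<Inter>i\<in>I. range (p (t i) (a i)))"

end

theory Submission imports Defs begin

lemma parallelogram_real:
  fixes a b :: "'a::real_inner"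
  shows "norm (a - b)^2 + norm (a + b)^2 = 2 * norm a ^2 + 2 * norm b^2"
  by (simp add: power2_norm_eq_inner inner_add_left inner_add_right inner_diff_left inner_diff_right inner_commute)

lemma proj_exists:
  fixes M :: "'a::{real_inner, complete_space} set"
  assumes cl: "closed M" and z0: "0 \<in> M"
    and add: "\<And>u v. u \<in> M \<Longrightarrow> v \<in> M \<Longrightarrow> u + v \<in> M"
    and sc: "\<And>c u. u \<in> M \<Longrightarrow> scaleR c u \<in> M"
  shows "\<exists>y\<in>M. \<forall>z\<in>M. inner z (x - y) = 0"
proof -
  define d where "d = Inf ((\<lambda>m. (norm (x - m))^2) ` M)"
  have bdd: "bdd_below ((\<lambda>m. (norm (x - m))^2) ` M)"
    by (rule bdd_belowI[of _ 0]) auto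
  have dle: "d \<le> (norm (x - m))^2" if "m \<in> M" for m
    unfolding d_def using bdd that by (auto intro: cInf_lower)
  have "\<exists>m\<in>M. (norm (x - m))^2 < d + 1 / (Suc n)" for n :: nat
  proof -
    have "Inf ((\<lambda>m. (norm (x - m))^2) ` M) < d + 1 / Suc n" unfolding d_def by simp
    then obtain v where "v \<in> (\<lambda>m. (norm (x - m))^2) ` M" "v < d + 1 / Suc n"
      using cInf_lessD[of "(\<lambda>m. (norm (x - m))^2) ` M"] z0 by blast
    then show ?thesis by auto
  qed
  then obtain f where fM: "\<And>n. f n \<in> M" and fd: "\<And>n. (norm (x - f n))^2 < d + 1 / Suc n"
    by metis
  have bound: "(norm (f n - f m))^2 \<le> 2 / Suc n + 2 / Suc m" for n m
  proof -
    have mid: "scaleR (1/2) (f n + f m) \<in> M" using fM add sc by blast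
    have "norm ((x - f n) - (x - f m))^2 + norm ((x - f n) + (x - f m))^2
        = 2 * norm (x - f n)^2 + 2 * norm (x - f m)^2" by (rule parallelogram_real)
    moreover have "(x - f n) + (x - f m) = 2 *\<^sub>R (x - scaleR (1/2) (f n + f m))"
      by (simp add: algebra_simps scaleR_2)
    moreover have "norm ((x - f n) - (x - f m)) = norm (f n - f m)"
      by (simp add: norm_minus_commute)
    ultimately have "norm (f n - f m)^2 + 4 * norm (x - scaleR (1/2) (f n + f m))^2
        = 2 * norm (x - f n)^2 + 2 * norm (x - f m)^2"
      by (simp add: power_mult_distrib)
    moreover have "d \<le> norm (x - scaleR (1/2) (f n + f m))^2" using dle mid by blast
    ultimately show ?thesis using fd[of n] fd[of m] by linarith
  qed
  have "Cauchy f"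
  proof (rule metric_CauchyI)
    fix e :: real assume e: "e > 0"
    obtain N :: nat where N: "4 / e^2 < N" using reals_Archimedean2 by blast
    have N0: "4 / Suc N < e^2"
    proof -
      have "4 / e^2 < Suc N" using N by simp
      then show ?thesis using e by (simp add: field_simps)
    qed
    show "\<exists>M. \<forall>m\<ge>M. \<forall>n\<ge>M. dist (f m) (f n) < e"
    proof (intro exI allI impI)
      fix m n assume mn: "N \<le> m" "N \<le> n"
      have "2 / real (Suc m) \<le> 2 / Suc N" using mn by (intro divide_left_mono) auto
      moreover have "2 / real (Suc n) \<le> 2 / Suc N" using mn by (intro divide_left_mono) auto
      ultimately have "(dist (f m) (f n))^2 < e^2"
        using bound[of m n] N0 by (simp add: dist_norm)
      then show "dist (f m) (f n) < e" using e
        by (meson abs_le_square_iff abs_of_nonneg less_le not_le zero_le_dist dual_order.strict_implies_order power_less_imp_less_base)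
    qed
  qed
  then obtain y where fy: "f \<longlonglongrightarrow> y" using Cauchy_convergent_iff convergent_def by blast
  have yM: "y \<in> M" using closed_sequentially[OF cl fM fy] .
  have lim1: "(\<lambda>n. (norm (x - f n))^2) \<longlonglongrightarrow> (norm (x - y))^2"
    by (intro tendsto_intros fy)
  have lim2: "(\<lambda>n. d + 1 / Suc n) \<longlonglongrightarrow> d"
    using tendsto_add[OF tendsto_const LIMSEQ_inverse_real_of_nat, of d]
    by (simp add: inverse_eq_divide)
  have yd: "(norm (x - y))^2 \<le> d"
    by (rule LIMSEQ_le[OF lim1 lim2]) (use fd less_imp_le in blast)
  have min: "(norm (x - y))^2 \<le> (norm (x - m))^2" if "m \<in> M" for m
    using yd dle[OF that] by linarith
  show ?thesis
  proof (intro bexI[OF _ yM] ballI)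
    fix z assume zM: "z \<in> M"
    define w where "w = x - y"
    define c where "c = inner z w"
    show "inner z (x - y) = 0"
    proof (cases "z = 0")
      case True then show ?thesis by simp
    next
      case False
      define N where "N = inner z z"
      have Npos: "N > 0" using False unfolding N_def by simp
      define s where "s = c / N"
      have "y + s *\<^sub>R z \<in> M" using add sc yM zM by blast
      then have "(norm w)^2 \<le> (norm (w - s *\<^sub>R z))^2" using min unfolding w_def
        by (metis diff_diff_eq)
      also have "(norm (w - s *\<^sub>R z))^2 = (norm w)^2 - 2 * s * c + s^2 * N"
        unfolding c_def N_def
        unfolding power2_norm_eq_inner by (simp add: inner_diff_left inner_diff_right inner_commute power2_eq_square algebra_simps)
      also have "\<dots> = (norm w)^2 - c^2 / N"
        unfolding s_def using Npos by (simp add: field_simps power2_eq_square)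
      finally have "c^2 / N \<le> 0" by simp
      then have "c^2 \<le> 0" using Npos by (simp add: divide_le_0_iff)
      then have "c = 0" by simp
      then show ?thesis unfolding c_def w_def .
    qed
  qed
qed

definition csub :: "'a::complex_inner set \<Rightarrow> bool" where
  "csub M \<longleftrightarrow> closed M \<and> 0 \<in> M \<and> (\<forall>u\<in>M. \<forall>v\<in>M. u + v \<in> M) \<and> (\<forall>c. \<forall>u\<in>M. scaleC c u \<in> M)"

lemma csub_scaleR: "csub M \<Longrightarrow> u \<in> M \<Longrightarrow> scaleR r u \<in> M"
  unfolding csub_def by (metis scaleC_of_real)

lemma csub_diff: "csub M \<Longrightarrow> u \<in> M \<Longrightarrow> v \<in> M \<Longrightarrow> u - v \<in> M"
proof -
  assume a: "csub M" "u \<in> M" "v \<in> M"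
  then have "scaleR (-1) v \<in> M" using csub_scaleR by blast
  then have "u + scaleR (-1) v \<in> M" using a unfolding csub_def by blast
  then show ?thesis by simp
qed

lemma cinner_eq_0: "cinner z w = 0 \<longleftrightarrow> inner z w = 0 \<and> inner (scaleC \<i> z) w = 0"
  unfolding cinner_def by (simp add: complex_eq_iff)

lemma cinner_diff_right: "cinner z (u - v) = cinner z u - cinner z v"
  unfolding cinner_def by (simp add: complex_eq_iff inner_diff_right)

lemma orthoproj_eq:
  assumes "\<And>u v. u \<in> M \<Longrightarrow> v \<in> M \<Longrightarrow> u - v \<in> M"
    and "y \<in> M" and "\<forall>z\<in>M. cinner z (x - y) = 0"
  shows "orthoproj M x = y"
  unfolding orthoproj_def
proof (rule the_equality)
  show "y \<in> M \<and> (\<forall>z\<in>M. cinner z (x - y) = 0)" using assms by blast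
next
  fix y' assume h: "y' \<in> M \<and> (\<forall>z\<in>M. cinner z (x - y') = 0)"
  have d: "y' - y \<in> M" using assms h by blast
  have "inner (y' - y) (x - y') = 0" using h d cinner_eq_0 by blast
  moreover have "inner (y' - y) (x - y) = 0" using assms d cinner_eq_0 by blast
  ultimately have "inner (y' - y) ((x - y) - (x - y')) = 0" by (simp add: inner_diff_right)
  then have "inner (y' - y) (y' - y) = 0" by simp
  then show "y' = y" by simp
qed

lemma orthoproj_props:
  fixes M :: "'a::{complex_inner, complete_space} set"
  assumes "csub M"
  shows "orthoproj M x \<in> M \<and> (\<forall>z\<in>M. cinner z (x - orthoproj M x) = 0)"
proof -
  have "\<exists>y\<in>M. \<forall>z\<in>M. inner z (x - y) = 0"
    using assms by (intro proj_exists) (auto simp: csub_def intro: csub_scaleR)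
  then obtain y where y: "y \<in> M" "\<forall>z\<in>M. inner z (x - y) = 0" by blast
  have "\<forall>z\<in>M. cinner z (x - y) = 0"
    using y assms unfolding cinner_eq_0 csub_def by blast
  moreover have "orthoproj M x = y"
    by (rule orthoproj_eq) (use y calculation assms csub_diff in auto)
  ultimately show ?thesis using y by simp
qed

lemma orthoproj_in: "csub M \<Longrightarrow> orthoproj M (x::'a::{complex_inner, complete_space}) \<in> M"
  using orthoproj_props by blast

lemma orthoproj_orth: "csub M \<Longrightarrow> z \<in> M \<Longrightarrow> cinner z ((x::'a::{complex_inner, complete_space}) - orthoproj M x) = 0"
  using orthoproj_props by blast

lemma orthoproj_orth_real: "csub M \<Longrightarrow> z \<in> M \<Longrightarrow> inner z ((x::'a::{complex_inner, complete_space}) - orthoproj M x) = 0"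
  using orthoproj_orth cinner_eq_0 by blast

lemma orthoproj_diff:
  fixes M :: "'a::{complex_inner, complete_space} set"
  assumes "csub M"
  shows "orthoproj M (x - y) = orthoproj M x - orthoproj M y"
proof (rule orthoproj_eq)
  show "u - v \<in> M" if "u \<in> M" "v \<in> M" for u v using csub_diff assms that by blast
  show "orthoproj M x - orthoproj M y \<in> M" using csub_diff assms orthoproj_in by blast
  show "\<forall>z\<in>M. cinner z (x - y - (orthoproj M x - orthoproj M y)) = 0"
  proof
    fix z assume "z \<in> M"
    have "x - y - (orthoproj M x - orthoproj M y) = (x - orthoproj M x) - (y - orthoproj M y)"
      by (simp add: algebra_simps)
    then show "cinner z (x - y - (orthoproj M x - orthoproj M y)) = 0"
      using orthoproj_orth[OF assms \<open>z \<in> M\<close>] by (simp add: cinner_diff_right)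
  qed
qed

lemma orthoproj_selfadj:
  fixes M :: "'a::{complex_inner, complete_space} set"
  assumes "csub M"
  shows "inner y (orthoproj M x) = inner (orthoproj M y) x"
proof -
  have "inner (orthoproj M x) (y - orthoproj M y) = 0"
    using orthoproj_orth_real[OF assms orthoproj_in[OF assms]] .
  then have 1: "inner y (orthoproj M x) = inner (orthoproj M y) (orthoproj M x)"
    by (simp add: inner_diff_right inner_commute)
  have "inner (orthoproj M y) (x - orthoproj M x) = 0"
    using orthoproj_orth_real[OF assms orthoproj_in[OF assms]] .
  then have 2: "inner (orthoproj M y) x = inner (orthoproj M y) (orthoproj M x)"
    by (simp add: inner_diff_right)
  show ?thesis using 1 2 by simp
qed

lemma orthoproj_orth_compl:
  fixes M :: "'a::{complex_inner, complete_space} set"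
  assumes M: "csub M" and H: "csub H" and inv: "orthoproj M ` H \<subseteq> H"
  shows "orthoproj M ` orth_compl H \<subseteq> orth_compl H"
proof
  fix w assume "w \<in> orthoproj M ` orth_compl H"
  then obtain x where x: "x \<in> orth_compl H" and w: "w = orthoproj M x" by blast
  have xo: "inner y x = 0" if "y \<in> H" for y
    using x that unfolding orth_compl_def cinner_eq_0 by blast
  show "w \<in> orth_compl H"
    unfolding orth_compl_def cinner_eq_0
  proof (intro CollectI ballI conjI)
    fix y assume y: "y \<in> H"
    have iy: "scaleC \<i> y \<in> H" using H y unfolding csub_def by blast
    show "inner y w = 0" unfolding w orthoproj_selfadj[OF M]
      using xo inv y by blast
    show "inner (scaleC \<i> y) w = 0" unfolding w orthoproj_selfadj[OF M]
      using xo inv iy by blast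
  qed
qed

lemma orthoproj_commute:
  fixes M :: "'a::{complex_inner, complete_space} set"
  assumes M: "csub M" and H: "csub H" and inv: "orthoproj M ` H \<subseteq> H"
  shows "orthoproj M \<circ> orthoproj H = orthoproj H \<circ> orthoproj M"
proof
  fix x
  let ?P = "orthoproj M" and ?Q = "orthoproj H"
  have "?Q (?P x) = ?P (?Q x)"
  proof (rule orthoproj_eq)
    show "u - v \<in> H" if "u \<in> H" "v \<in> H" for u v using csub_diff H that by blast
    show "?P (?Q x) \<in> H" using inv orthoproj_in[OF H] by blast
    have "x - ?Q x \<in> orth_compl H"
      unfolding orth_compl_def using orthoproj_orth[OF H] by blast
    then have "?P (x - ?Q x) \<in> orth_compl H"
      using orthoproj_orth_compl[OF M H inv] by blast
    then show "\<forall>z\<in>H. cinner z (?P x - ?P (?Q x)) = 0"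
      unfolding orth_compl_def orthoproj_diff[OF M] by blast
  qed
  then show "(?P \<circ> ?Q) x = (?Q \<circ> ?P) x" by simp
qed

lemma csub_INT: "(\<And>i. i \<in> I \<Longrightarrow> csub (A i)) \<Longrightarrow> csub (\<Inter>i\<in>I. A i)"
  unfolding csub_def by (auto intro!: closed_INT)

lemma csub_Int: "csub A \<Longrightarrow> csub B \<Longrightarrow> csub (A \<inter> B)"
  unfolding csub_def by auto

lemma csub_range:
  fixes q :: "'a::complex_inner \<Rightarrow> 'a"
  assumes "is_projection q"
  shows "csub (range q)"
proof -
  have bl: "bounded_linear q" and sc: "\<And>c x. q (scaleC c x) = scaleC c (q x)" and idem: "q \<circ> q = q"
    using assms unfolding is_projection_def by auto
  interpret bounded_linear q by fact
  have r: "range q = {x. q x = x}" using idem by (auto simp: fun_eq_iff) (metis rangeI)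
  show ?thesis unfolding r csub_def
    by (auto simp: add sc zero intro!: closed_Collect_eq linear_continuous_on bl continuous_on_id)
qed

lemma op_prod_Nil[simp]: "op_prod [] = id" unfolding op_prod_def by simp
lemma op_prod_Cons[simp]: "op_prod (W # Ws) = W \<circ> op_prod Ws" unfolding op_prod_def by simp
lemma op_prod_append: "op_prod (Ws @ Vs) = op_prod Ws \<circ> op_prod Vs"
  by (induction Ws) (simp_all add: fun_eq_iff)

lemma op_prod_bl: "(\<And>W. W \<in> set L \<Longrightarrow> bounded_linear W) \<Longrightarrow> bounded_linear (op_prod L)"
proof (induction L)
  case Nil then show ?case by (simp add: id_def bounded_linear_ident)
next
  case (Cons a L)
  have 1: "bounded_linear a" using Cons.prems by simp
  have 2: "bounded_linear (op_prod L)" using Cons by simp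
  show ?case using bounded_linear_compose[OF 1 2] by (simp add: o_def)
qed

lemma op_prod_scaleC: "(\<And>W. W \<in> set L \<Longrightarrow> \<forall>c x. W (scaleC c x) = scaleC c (W x))
   \<Longrightarrow> op_prod L (scaleC c x) = scaleC c (op_prod L x)"
  by (induction L) auto

lemma op_prod_adj: "(\<And>W. W \<in> set L \<Longrightarrow> \<forall>x y. cinner (W x) y = cinner x (W y))
   \<Longrightarrow> cinner x (op_prod L y) = cinner (op_prod (rev L) x) y"
proof (induction L arbitrary: x)
  case Nil then show ?case by simp
next
  case (Cons W L)
  have "cinner x (op_prod (W # L) y) = cinner x (W (op_prod L y))" by simp
  also have "\<dots> = cinner (W x) (op_prod L y)" using Cons.prems by simp
  also have "\<dots> = cinner (op_prod (rev L) (W x)) y" using Cons by simp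
  finally show ?case by (simp add: op_prod_append)
qed

lemma op_prod_fix: "(\<And>W. W \<in> set L \<Longrightarrow> W z = z) \<Longrightarrow> op_prod L z = z"
  by (induction L) auto

lemma proj_facts:
  assumes "is_projection q"
  shows "bounded_linear q" "\<forall>c x. q (scaleC c x) = scaleC c (q x)"
    "\<forall>x y. cinner (q x) y = cinner x (q y)" "\<And>x. q (q x) = q x"
  using assms unfolding is_projection_def by (auto simp: fun_eq_iff)

lemma H_eq: "H_pi PI = (\<Inter>(Ws,Vs)\<in>{(Ws,Vs). set Ws \<subseteq> PI \<and> set Vs \<subseteq> PI \<and> mset Ws = mset Vs}. {\<phi>. op_prod Ws \<phi> = op_prod Vs \<phi>})"
  unfolding H_pi_def commutes_on_def by blast

lemma H_csub:
  fixes PI :: "('a::complex_inner \<Rightarrow> 'a) set"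
  assumes pr: "\<And>W. W \<in> PI \<Longrightarrow> is_projection W"
  shows "csub (H_pi PI)"
proof -
  have bl: "bounded_linear (op_prod L)" if "set L \<subseteq> PI" for L
    by (rule op_prod_bl) (use that pr proj_facts(1) in blast)
  have sc: "op_prod L (scaleC c x) = scaleC c (op_prod L x)" if "set L \<subseteq> PI" for L c x
    by (rule op_prod_scaleC) (use that pr proj_facts(2) in blast)
  have "closed (H_pi PI)" unfolding H_eq
  proof (rule closed_INT, clarify)
    fix Ws Vs :: "('a \<Rightarrow> 'a) list" assume "set Ws \<subseteq> PI" "set Vs \<subseteq> PI"
    then show "closed {\<phi>. op_prod Ws \<phi> = op_prod Vs \<phi>}"
      by (intro closed_Collect_eq linear_continuous_on bl)
  qed
  moreover have "0 \<in> H_pi PI"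
    unfolding H_pi_def commutes_on_def
  proof (intro CollectI allI impI)
    fix Ws Vs :: "('a \<Rightarrow> 'a) list" assume "set Ws \<subseteq> PI \<and> set Vs \<subseteq> PI \<and> mset Ws = mset Vs"
    then show "op_prod Ws 0 = op_prod Vs 0" using bl[of Ws] bl[of Vs] by (simp add: bounded_linear.linear linear_0)
  qed
  moreover have "u + v \<in> H_pi PI" if u: "u \<in> H_pi PI" and v: "v \<in> H_pi PI" for u v
    unfolding H_pi_def commutes_on_def
  proof (intro CollectI allI impI)
    fix Ws Vs :: "('a \<Rightarrow> 'a) list" assume h: "set Ws \<subseteq> PI \<and> set Vs \<subseteq> PI \<and> mset Ws = mset Vs"
    then have "op_prod Ws u = op_prod Vs u" "op_prod Ws v = op_prod Vs v"
      using u v unfolding H_pi_def commutes_on_def by blast+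
    then show "op_prod Ws (u + v) = op_prod Vs (u + v)" using h bl[of Ws] bl[of Vs] by (simp add: bounded_linear.linear linear_add)
  qed
  moreover have "scaleC c u \<in> H_pi PI" if u: "u \<in> H_pi PI" for u c
    unfolding H_pi_def commutes_on_def
  proof (intro CollectI allI impI)
    fix Ws Vs :: "('a \<Rightarrow> 'a) list" assume h: "set Ws \<subseteq> PI \<and> set Vs \<subseteq> PI \<and> mset Ws = mset Vs"
    then have "op_prod Ws u = op_prod Vs u"
      using u unfolding H_pi_def commutes_on_def by blast
    then show "op_prod Ws (scaleC c u) = op_prod Vs (scaleC c u)" using h sc[of Ws] sc[of Vs] by simp
  qed
  ultimately show ?thesis unfolding csub_def by blast
qed

lemma H_comm: "\<phi> \<in> H_pi PI \<Longrightarrow> set Ws \<subseteq> PI \<Longrightarrow> set Vs \<subseteq> PI \<Longrightarrow> mset Ws = mset Vs \<Longrightarrow> op_prod Ws \<phi> = op_prod Vs \<phi>"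
  unfolding H_pi_def commutes_on_def by blast

lemma H_prod:
  assumes "\<phi> \<in> H_pi PI" "set L \<subseteq> PI"
  shows "op_prod L \<phi> \<in> H_pi PI"
  unfolding H_pi_def commutes_on_def
proof (intro CollectI allI impI)
  fix Ws Vs assume h: "set Ws \<subseteq> PI \<and> set Vs \<subseteq> PI \<and> mset Ws = mset Vs"
  have "op_prod (Ws @ L) \<phi> = op_prod (Vs @ L) \<phi>"
    by (rule H_comm[OF assms(1)]) (use h assms(2) in auto)
  then show "op_prod Ws (op_prod L \<phi>) = op_prod Vs (op_prod L \<phi>)" by (simp add: op_prod_append)
qed

lemma mainD:
  fixes PI :: "('a::{complex_inner, complete_space} \<Rightarrow> 'a) set"
  assumes pr: "\<And>W. W \<in> PI \<Longrightarrow> is_projection W"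
    and phi: "\<phi> \<in> H_pi PI" and L: "set L \<subseteq> PI"
  shows "orthoproj (\<Inter>q\<in>set L. range q) \<phi> = op_prod L \<phi>"
proof (rule orthoproj_eq)
  let ?M = "\<Inter>q\<in>set L. range q"
  have csM: "csub ?M"
  proof (rule csub_INT)
    fix q assume "q \<in> set L"
    then have "is_projection q" using pr L by blast
    then show "csub (range q)" by (rule csub_range)
  qed
  show "u - v \<in> ?M" if "u \<in> ?M" "v \<in> ?M" for u v using csub_diff[OF csM] that by blast
  show "op_prod L \<phi> \<in> ?M"
  proof
    fix q assume q: "q \<in> set L"
    have qp: "is_projection q" using pr q L by blast
    have idem: "\<And>x. q (q x) = q x" using proj_facts(4)[OF qp] .
    let ?R = "op_prod (remove1 q L) \<phi>"
    have sr: "set (remove1 q L) \<subseteq> PI" using L set_remove1_subset[of q L] by (rule order_trans[rotated])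
    have m1: "mset L = mset (q # remove1 q L)" using q by simp
    have m2: "mset (q # L) = mset (q # q # remove1 q L)" using q by simp
    have qPI: "q \<in> PI" using subsetD[OF L q] .
    have s1: "set (q # remove1 q L) \<subseteq> PI" using sr qPI by simp
    have s2: "set (q # L) \<subseteq> PI" using L qPI by simp
    have s3: "set (q # q # remove1 q L) \<subseteq> PI" using sr qPI by simp
    have e1: "op_prod L \<phi> = q ?R"
      using H_comm[OF phi L s1 m1] by simp
    have e2: "op_prod (q # L) \<phi> = q (q ?R)"
      using H_comm[OF phi s2 s3 m2] by simp
    have "q (op_prod L \<phi>) = op_prod L \<phi>" using e1 e2 idem by simp
    then show "op_prod L \<phi> \<in> range q" by (metis rangeI)
  qed
  show "\<forall>z\<in>?M. cinner z (\<phi> - op_prod L \<phi>) = 0"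
  proof
    fix z assume z: "z \<in> ?M"
    have fix1: "op_prod (rev L) z = z"
    proof (rule op_prod_fix)
      fix W assume "W \<in> set (rev L)"
      then have W: "W \<in> set L" by simp
      then obtain y where "z = W y" using z by blast
      moreover have "is_projection W" using pr W L by blast
      ultimately show "W z = z" using proj_facts(4) by metis
    qed
    have "cinner z (op_prod L \<phi>) = cinner (op_prod (rev L) z) \<phi>"
    proof (rule op_prod_adj)
      fix W assume "W \<in> set L"
      then have "is_projection W" using pr L by blast
      then show "\<forall>x y. cinner (W x) y = cinner x (W y)" by (rule proj_facts(3))
    qed
    then show "cinner z (\<phi> - op_prod L \<phi>) = 0" by (simp add: cinner_diff_right fix1)
  qed
qed

lemma prPI:
  assumes proj: "\<And>s b. s \<in> S \<Longrightarrow> b \<in> \<Gamma> s \<Longrightarrow> is_projection (p s b)"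
  shows "\<And>W. W \<in> pi_family S \<Gamma> p \<Longrightarrow> is_projection W"
  unfolding pi_family_def using proj by blast

lemma set_map_sub:
  assumes "\<And>j. j \<in> set js \<Longrightarrow> t j \<in> S \<and> a j \<in> \<Gamma> (t j)"
  shows "set (map (\<lambda>j. p (t j) (a j)) js) \<subseteq> pi_family S \<Gamma> p"
  using assms unfolding pi_family_def by auto

lemma mainD':
  fixes p :: "'t \<Rightarrow> 'b \<Rightarrow> 'h::{complex_inner, complete_space} \<Rightarrow> 'h"
  assumes proj: "\<And>s b. s \<in> S \<Longrightarrow> b \<in> \<Gamma> s \<Longrightarrow> is_projection (p s b)"
    and js: "\<And>j. j \<in> set js \<Longrightarrow> t j \<in> S \<and> a j \<in> \<Gamma> (t j)"
    and phi: "\<phi> \<in> H_pi (pi_family S \<Gamma> p)"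
  shows "orthoproj (\<Inter>j\<in>set js. range (p (t j) (a j))) \<phi> = op_prod (map (\<lambda>j. p (t j) (a j)) js) \<phi>"
proof -
  have "orthoproj (\<Inter>q\<in>set (map (\<lambda>j. p (t j) (a j)) js). range q) \<phi> = op_prod (map (\<lambda>j. p (t j) (a j)) js) \<phi>"
    by (rule mainD[OF prPI[OF proj] phi set_map_sub[where t=t and a=a and p=p, OF js]]) auto
  moreover have "(\<Inter>q\<in>set (map (\<lambda>j. p (t j) (a j)) js). range q) = (\<Inter>j\<in>set js. range (p (t j) (a j)))"
    by simp
  ultimately show ?thesis by simp
qed

theorem proposition2:
  fixes S :: "'t set" and \<Gamma> :: "'t \<Rightarrow> 'b set"
    and p :: "'t \<Rightarrow> 'b \<Rightarrow> 'h::{complex_inner, complete_space} \<Rightarrow> 'h"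
    and k :: nat and t :: "nat \<Rightarrow> 't" and a :: "nat \<Rightarrow> 'b"
  assumes count: "\<And>s. s \<in> S \<Longrightarrow> countable (\<Gamma> s)"
    and proj: "\<And>s b. s \<in> S \<Longrightarrow> b \<in> \<Gamma> s \<Longrightarrow> is_projection (p s b)"
    and resolution: "\<And>s x. s \<in> S \<Longrightarrow> ((\<lambda>b. p s b x) has_sum x) (\<Gamma> s)"
    and k: "1 \<le> k"
    and t: "\<And>i. i < k \<Longrightarrow> t i \<in> S"
    and a: "\<And>i. i < k \<Longrightarrow> a i \<in> \<Gamma> (t i)"
  defines "PI \<equiv> pi_family S \<Gamma> p"
  defines "P \<equiv> meet_proj p t a {..<k}"
  shows "(P ` H_pi PI \<subseteq> H_pi PI \<and> P ` orth_compl (H_pi PI) \<subseteq> orth_compl (H_pi PI))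
    \<and> (P \<circ> orthoproj (H_pi PI) = orthoproj (H_pi PI) \<circ> P)
    \<and> (\<forall>\<phi>\<in>H_pi PI. P \<phi> = orthoproj ((\<Inter>i<k. range (p (t i) (a i))) \<inter> H_pi PI) \<phi>)
    \<and> (\<forall>\<phi>\<in>H_pi PI. P \<phi> = op_prod (map (\<lambda>i. p (t i) (a i)) [0..<k]) \<phi>)
    \<and> (\<forall>\<phi>\<in>H_pi PI. \<forall>i<k.
           ((\<lambda>b. meet_proj p t (a(i := b)) {..<k} \<phi>) has_sum meet_proj p t a ({..<k} - {i}) \<phi>)
             (\<Gamma> (t i)))"
proof -
  let ?H = "H_pi PI"
  let ?M = "\<Inter>i<k. range (p (t i) (a i))"
  have pr: "\<And>W. W \<in> PI \<Longrightarrow> is_projection W" unfolding PI_def by (rule prPI[OF proj])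
  have csH: "csub ?H" by (rule H_csub[OF pr])
  have csM: "csub ?M"
  proof (rule csub_INT)
    fix i assume "i \<in> {..<k}"
    then show "csub (range (p (t i) (a i)))" using proj t a by (intro csub_range) auto
  qed
  have Pdef: "P = orthoproj ?M" unfolding P_def meet_proj_def ..
  have tak: "\<And>j. j \<in> set [0..<k] \<Longrightarrow> t j \<in> S \<and> a j \<in> \<Gamma> (t j)" using t a by auto
  have Pd: "P \<phi> = op_prod (map (\<lambda>i. p (t i) (a i)) [0..<k]) \<phi>" if "\<phi> \<in> ?H" for \<phi>
    using mainD'[where js="[0..<k]" and t=t and a=a and p=p, OF proj tak, of \<phi>] that unfolding Pdef PI_def by (simp add: atLeast0LessThan)
  have inv: "P ` ?H \<subseteq> ?H"
  proof
    fix x assume "x \<in> P ` ?H"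
    then obtain \<phi> where \<phi>: "\<phi> \<in> ?H" "x = P \<phi>" by blast
    show "x \<in> ?H" unfolding \<phi>(2) Pd[OF \<phi>(1)]
      by (rule H_prod[OF \<phi>(1)]) (unfold PI_def, rule set_map_sub[where t=t and a=a and p=p, OF tak])
  qed
  have inv': "orthoproj ?M ` ?H \<subseteq> ?H" using inv Pdef by simp
  have A: "P ` orth_compl ?H \<subseteq> orth_compl ?H"
    unfolding Pdef by (rule orthoproj_orth_compl[OF csM csH inv'])
  have B: "P \<circ> orthoproj ?H = orthoproj ?H \<circ> P"
    unfolding Pdef by (rule orthoproj_commute[OF csM csH inv'])
  have C: "P \<phi> = orthoproj (?M \<inter> ?H) \<phi>" if ph: "\<phi> \<in> ?H" for \<phi>
  proof (rule sym, rule orthoproj_eq)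
    show "u - v \<in> ?M \<inter> ?H" if "u \<in> ?M \<inter> ?H" "v \<in> ?M \<inter> ?H" for u v
      using csub_diff[OF csub_Int[OF csM csH]] that by blast
    show "P \<phi> \<in> ?M \<inter> ?H" using inv ph orthoproj_in[OF csM] Pdef by blast
    show "\<forall>z\<in>?M \<inter> ?H. cinner z (\<phi> - P \<phi>) = 0"
      using orthoproj_orth[OF csM] Pdef by blast
  qed
  have E: "((\<lambda>b. meet_proj p t (a(i := b)) {..<k} \<phi>) has_sum meet_proj p t a ({..<k} - {i}) \<phi>) (\<Gamma> (t i))"
    if ph: "\<phi> \<in> ?H" and i: "i < k" for \<phi> i
  proof -
    define js where "js = filter (\<lambda>j. j \<noteq> i) [0..<k]"
    define G where "G = op_prod (map (\<lambda>j. p (t j) (a j)) js)"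
    have setjs: "set js = {..<k} - {i}" unfolding js_def by auto
    have tajs: "\<And>j. j \<in> set js \<Longrightarrow> t j \<in> S \<and> a j \<in> \<Gamma> (t j)" using t a setjs by auto
    have Gbl: "bounded_linear G" unfolding G_def
    proof (rule op_prod_bl)
      fix W assume "W \<in> set (map (\<lambda>j. p (t j) (a j)) js)"
      then obtain j where "j \<in> set js" "W = p (t j) (a j)" by auto
      then show "bounded_linear W" using proj tajs proj_facts(1) by blast
    qed
    have rhs: "meet_proj p t a ({..<k} - {i}) \<phi> = G \<phi>"
      using mainD'[where js=js and t=t and a=a and p=p, OF proj tajs, of \<phi>] ph unfolding meet_proj_def G_def PI_def setjs by simp
    have lhs: "meet_proj p t (a(i := b)) {..<k} \<phi> = G (p (t i) b \<phi>)" if b: "b \<in> \<Gamma> (t i)" for b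
    proof -
      let ?a = "a(i := b)"
      have set1: "set (js @ [i]) = {..<k}" using setjs i by auto
      have ta1: "\<And>j. j \<in> set (js @ [i]) \<Longrightarrow> t j \<in> S \<and> ?a j \<in> \<Gamma> (t j)"
        using t a b set1 by auto
      have "meet_proj p t ?a {..<k} \<phi> = op_prod (map (\<lambda>j. p (t j) (?a j)) (js @ [i])) \<phi>"
        using mainD'[where js="js @ [i]" and t=t and a="a(i:=b)" and p=p, OF proj ta1, of \<phi>] ph unfolding meet_proj_def PI_def set1 by simp
      also have "\<dots> = op_prod (map (\<lambda>j. p (t j) (?a j)) js) (p (t i) b \<phi>)"
        by (simp add: op_prod_append)
      also have "map (\<lambda>j. p (t j) (?a j)) js = map (\<lambda>j. p (t j) (a j)) js"
        using setjs by (intro map_cong) auto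
      finally show ?thesis unfolding G_def .
    qed
    have "((\<lambda>b. G (p (t i) b \<phi>)) has_sum G \<phi>) (\<Gamma> (t i))"
      by (rule has_sum_bounded_linear[OF Gbl resolution[OF t[OF i]]])
    moreover have "((\<lambda>b. meet_proj p t (a(i := b)) {..<k} \<phi>) has_sum G \<phi>) (\<Gamma> (t i))
        \<longleftrightarrow> ((\<lambda>b. G (p (t i) b \<phi>)) has_sum G \<phi>) (\<Gamma> (t i))"
      by (rule has_sum_cong) (rule lhs)
    ultimately show ?thesis unfolding rhs by simp
  qed
  show ?thesis using inv A B C Pd E by blast
qed

end
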